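(* Consider the Data Revocation Game with negligible unlearning cost, with $d_i^{\max}=d^{\max}$ for all $i$ and $m_1<m_2<\dots<m_I$, where $m_i=(\xi_i\ell_i)^{-1}-\epsilon_i$. Then the game has a unique Nash equilibrium, described as follows. (i) If there is a user $j\in\mathcal I$ with $(I-j)d^{\max}\le m_j\le(I-j+1)d^{\max}$, then the unique equilibrium is $d_i^*=0$ for $i<j$, $d_j^*=(\xi_j\ell_j)^{-1}-(I-j)d^{\max}-\epsilon_j$, and $d_i^*=d^{\max}$ for $i>j$. (ii) Otherwise, with the conventions $m_0=-\infty$ and $m_{I+1}=+\infty$, there exists $j\in\{0,1,\dots,I\}$ with $m_j<(I-j)d^{\max}<m_{j+1}$, and the unique equilibrium is $d_i^*=0$ for $i\le j$ and $d_i^*=d^{\max}$ for $i>j$.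
   Context: Data Revocation Game with negligible unlearning cost: a finite set of users $\mathcal I=\{1,\dots,I\}$, $I\ge 2$, each with parameters $d_i^{\max}>0$, $\epsilon_i>0$, $\xi_i>0$, $\ell_i>0$. Each user chooses $d_i\in[0,d_i^{\max}]$, with payoff $U_i(d_i,\boldsymbol{d_{-i}})=\ln\big(\sum_{j\in\mathcal I}d_j+\epsilon_i\big)-\xi_i d_i\ell_i$. A Nash equilibrium is a profile $(d_i^* )$ with $d_i^*\in[0,d_i^{\max}]$ and $U_i(d_i^*,\boldsymbol{d_{-i}^*})\ge U_i(d_i,\boldsymbol{d_{-i}^*})$ for all $i$ and $d_i\in[0,d_i^{\max}]$. *)

theory Defs
  imports "HOL-Analysis.Analysis"
begin

text \<open>Data Revocation Game with negligible unlearning cost. Users are 1..I;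
a profile is d :: nat \<Rightarrow> real, only its values on {1..I} matter.\<close>

definition payoff :: "nat \<Rightarrow> (nat \<Rightarrow> real) \<Rightarrow> (nat \<Rightarrow> real) \<Rightarrow> (nat \<Rightarrow> real) \<Rightarrow> nat \<Rightarrow> (nat \<Rightarrow> real) \<Rightarrow> real" where
  "payoff I eps xi ell i d = ln ((\<Sum>j\<in>{1..I}. d j) + eps i) - xi i * d i * ell i"

definition feasible :: "nat \<Rightarrow> (nat \<Rightarrow> real) \<Rightarrow> (nat \<Rightarrow> real) \<Rightarrow> bool" where
  "feasible I dmax d \<longleftrightarrow> (\<forall>i\<in>{1..I}. 0 \<le> d i \<and> d i \<le> dmax i)"

definition nash_eq :: "nat \<Rightarrow> (nat \<Rightarrow> real) \<Rightarrow> (nat \<Rightarrow> real) \<Rightarrow> (nat \<Rightarrow> real) \<Rightarrow> (nat \<Rightarrow> real) \<Rightarrow> (nat \<Rightarrow> real) \<Rightarrow> bool" where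
  "nash_eq I dmax eps xi ell d \<longleftrightarrow> feasible I dmax d \<and>
     (\<forall>i\<in>{1..I}. \<forall>x. 0 \<le> x \<and> x \<le> dmax i \<longrightarrow>
        payoff I eps xi ell i d \<ge> payoff I eps xi ell i (d(i := x)))"

end

theory Submission imports Defs begin

lemma tangent: fixes v w :: real assumes "w > 0" "v > 0" shows "ln v \<le> ln w + (v - w) / w"
proof -
  have "ln (v / w) \<le> v / w - 1" using ln_le_minus_one[of "v/w"] assms by simp
  moreover have "ln (v/w) = ln v - ln w" using assms by (simp add: ln_div)
  moreover have "v / w - 1 = (v - w) / w" using assms by (simp add: field_simps)
  ultimately show ?thesis by simp
qed

lemma br_suff:
  fixes A c D y :: real
  assumes A: "A > 0" and c: "c > 0" and y: "0 \<le> y" "y \<le> D"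
    and h1: "y > 0 \<longrightarrow> A + y \<le> 1 / c" and h2: "y < D \<longrightarrow> A + y \<ge> 1 / c"
    and x: "0 \<le> x" "x \<le> D"
  shows "ln (A + x) - c * x \<le> ln (A + y) - c * y"
proof -
  have t: "ln (A + x) \<le> ln (A + y) + (x - y) / (A + y)" using tangent[of "A+y" "A+x"] A x y by simp
  have "(x - y) / (A + y) \<le> c * (x - y)"
  proof (cases "x > y")
    case True
    then have "A + y \<ge> 1/c" using h2 x by auto
    then have "1 / (A + y) \<le> c" using c A y by (simp add: field_simps)
    then have "(x - y) * (1 / (A + y)) \<le> (x - y) * c" using True by (intro mult_left_mono) auto
    then show ?thesis by (simp add: mult.commute)
  next
    case False
    show ?thesis
    proof (cases "x = y")
      case True then show ?thesis by simp
    next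
      case F: False
      with False have "y > x" by simp
      then have "A + y \<le> 1/c" using h1 x by auto
      then have "1 / (A + y) \<ge> c" using c A y by (simp add: field_simps)
      then have "(y - x) * (1 / (A + y)) \<ge> (y - x) * c" using \<open>y > x\<close> by (intro mult_left_mono) auto
      then have "(y - x) / (A + y) \<ge> (y - x) * c" by simp
      then show ?thesis by (simp add: algebra_simps diff_divide_distrib)
    qed
  qed
  with t show ?thesis by (simp add: algebra_simps)
qed

lemma br_nec1:
  fixes A c D y :: real
  assumes A: "A > 0" and c: "c > 0" and y: "0 < y" "y \<le> D"
    and opt: "\<forall>x. 0 \<le> x \<and> x \<le> D \<longrightarrow> ln (A + x) - c * x \<le> ln (A + y) - c * y"
  shows "A + y \<le> 1 / c"
proof (rule ccontr)
  assume "\<not> ?thesis"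
  hence gt: "A + y > 1/c" by simp
  define x0 where "x0 = max 0 (1/c - A)"
  have x0: "0 \<le> x0" "x0 < y" "A + x0 \<ge> 1/c" using gt y unfolding x0_def by auto
  define z where "z = (x0 + y) / 2"
  have z: "0 \<le> z" "z \<le> D" "x0 < z" "z < y" using x0 y unfolding z_def by auto
  have Az: "A + z > 1/c" using x0 z by linarith
  have t: "ln (A + y) \<le> ln (A + z) + (y - z) / (A + z)" using tangent[of "A+z" "A+y"] A z y by simp
  have "1 / (A + z) < c" using Az c A z by (simp add: field_simps)
  then have "(y - z) * (1 / (A + z)) < (y - z) * c" using z by (intro mult_strict_left_mono) auto
  then have "ln (A + y) - c * y < ln (A + z) - c * z" using t by (simp add: algebra_simps)
  with opt z show False by fastforce
qed

lemma br_nec2: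
  fixes A c D y :: real
  assumes A: "A > 0" and c: "c > 0" and y: "0 \<le> y" "y < D"
    and opt: "\<forall>x. 0 \<le> x \<and> x \<le> D \<longrightarrow> ln (A + x) - c * x \<le> ln (A + y) - c * y"
  shows "A + y \<ge> 1 / c"
proof (rule ccontr)
  assume "\<not> ?thesis"
  hence lt: "A + y < 1/c" by simp
  define x0 where "x0 = min D (1/c - A)"
  have x0: "x0 \<le> D" "y < x0" "A + x0 \<le> 1/c" using lt y unfolding x0_def by auto
  define z where "z = (x0 + y) / 2"
  have z: "0 \<le> z" "z \<le> D" "z < x0" "y < z" using x0 y unfolding z_def by auto
  have Az: "A + z < 1/c" using x0 z by linarith
  have t: "ln (A + y) \<le> ln (A + z) + (y - z) / (A + z)" using tangent[of "A+z" "A+y"] A z y by simp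
  have "1 / (A + z) > c" using Az c A z by (simp add: field_simps)
  then have "(z - y) * (1 / (A + z)) > (z - y) * c" using z by (intro mult_strict_left_mono) auto
  then have "(z - y) / (A + z) > (z - y) * c" by simp
  then have "ln (A + y) - c * y < ln (A + z) - c * z" using t by (simp add: algebra_simps diff_divide_distrib)
  with opt z show False by fastforce
qed

lemma sum_upd: fixes I :: nat and f :: "nat \<Rightarrow> real" assumes "i \<in> {1..I}"
  shows "(\<Sum>j\<in>{1..I}. (f(i := x)) j) = (\<Sum>j\<in>{1..I}-{i}. f j) + x"
proof -
  have "(\<Sum>j\<in>{1..I}. (f(i := x)) j) = (f(i:=x)) i + (\<Sum>j\<in>{1..I}-{i}. (f(i := x)) j)"
    using assms by (intro sum.remove) auto
  also have "(\<Sum>j\<in>{1..I}-{i}. (f(i := x)) j) = (\<Sum>j\<in>{1..I}-{i}. f j)" by (intro sum.cong) auto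
  finally show ?thesis by (simp add: add.commute)
qed

lemma ne_char:
  fixes I :: nat and D :: real and eps xi ell :: "nat \<Rightarrow> real" and d :: "nat \<Rightarrow> real"
  assumes pos: "\<forall>i\<in>{1..I}. eps i > 0 \<and> xi i > 0 \<and> ell i > 0"
    and feas: "feasible I (\<lambda>_. D) d"
  shows "nash_eq I (\<lambda>_. D) eps xi ell d \<longleftrightarrow>
    (\<forall>i\<in>{1..I}. (d i > 0 \<longrightarrow> (\<Sum>j\<in>{1..I}. d j) \<le> 1 / (xi i * ell i) - eps i) \<and>
                  (d i < D \<longrightarrow> (\<Sum>j\<in>{1..I}. d j) \<ge> 1 / (xi i * ell i) - eps i))"
proof -
  have key: "(\<forall>x. 0 \<le> x \<and> x \<le> D \<longrightarrow> payoff I eps xi ell i d \<ge> payoff I eps xi ell i (d(i := x))) \<longleftrightarrow>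
    ((d i > 0 \<longrightarrow> (\<Sum>j\<in>{1..I}. d j) \<le> 1 / (xi i * ell i) - eps i) \<and>
                  (d i < D \<longrightarrow> (\<Sum>j\<in>{1..I}. d j) \<ge> 1 / (xi i * ell i) - eps i))"
    if i: "i \<in> {1..I}" for i
  proof -
    define A where "A = (\<Sum>j\<in>{1..I}-{i}. d j) + eps i"
    define c where "c = xi i * ell i"
    have c: "c > 0" using pos i unfolding c_def by auto
    have "(\<Sum>j\<in>{1..I}-{i}. d j) \<ge> 0" using feas unfolding feasible_def by (intro sum_nonneg) auto
    moreover have "eps i > 0" using pos i by auto
    ultimately have A: "A > 0" unfolding A_def by linarith
    have y: "0 \<le> d i" "d i \<le> D" using feas i unfolding feasible_def by auto
    have S: "(\<Sum>j\<in>{1..I}. d j) = A + d i - eps i"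
      using sum_upd[OF i, of d "d i"] unfolding A_def by simp
    have P: "payoff I eps xi ell i (d(i := x)) = ln (A + x) - c * x" for x
      unfolding payoff_def sum_upd[OF i] A_def c_def by (simp add: algebra_simps)
    have P0: "payoff I eps xi ell i d = ln (A + d i) - c * d i"
      using P[of "d i"] by simp
    show ?thesis
    proof
      assume opt: "\<forall>x. 0 \<le> x \<and> x \<le> D \<longrightarrow> payoff I eps xi ell i d \<ge> payoff I eps xi ell i (d(i := x))"
      hence opt': "\<forall>x. 0 \<le> x \<and> x \<le> D \<longrightarrow> ln (A + x) - c * x \<le> ln (A + d i) - c * d i"
        using P P0 by simp
      show "(d i > 0 \<longrightarrow> (\<Sum>j\<in>{1..I}. d j) \<le> 1 / (xi i * ell i) - eps i) \<and>
                  (d i < D \<longrightarrow> (\<Sum>j\<in>{1..I}. d j) \<ge> 1 / (xi i * ell i) - eps i)"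
        using br_nec1[OF A c _ _ opt'] br_nec2[OF A c _ _ opt'] y S unfolding c_def by auto
    next
      assume h: "(d i > 0 \<longrightarrow> (\<Sum>j\<in>{1..I}. d j) \<le> 1 / (xi i * ell i) - eps i) \<and>
                  (d i < D \<longrightarrow> (\<Sum>j\<in>{1..I}. d j) \<ge> 1 / (xi i * ell i) - eps i)"
      show "\<forall>x. 0 \<le> x \<and> x \<le> D \<longrightarrow> payoff I eps xi ell i d \<ge> payoff I eps xi ell i (d(i := x))"
        using br_suff[OF A c y] h S unfolding P P0 c_def by auto
    qed
  qed
  show ?thesis unfolding nash_eq_def using feas key by auto
qed

lemma sum_step:
  fixes D :: real and I k :: nat
  shows "(\<Sum>i\<in>{1..I}. if i \<le> k then 0 else D) = real (I - k) * D"
proof -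
  have "(\<Sum>i\<in>{1..I}. if i \<le> k then 0 else D) = (\<Sum>i\<in>{k+1..I}. D)"
    by (rule sum.mono_neutral_cong_right) auto
  then show ?thesis by simp
qed

theorem theorem2:
  fixes I :: nat and D :: real and eps xi ell m :: "nat \<Rightarrow> real"
  assumes "I \<ge> 2" and "D > 0"
    and "\<forall>i\<in>{1..I}. eps i > 0 \<and> xi i > 0 \<and> ell i > 0"
    and m_def: "\<forall>i\<in>{1..I}. m i = 1 / (xi i * ell i) - eps i"
    and m_mono: "\<forall>i\<in>{1..I}. \<forall>k\<in>{1..I}. i < k \<longrightarrow> m i < m k"
  shows "(\<exists>d. nash_eq I (\<lambda>_. D) eps xi ell d \<and>
            (\<forall>d'. nash_eq I (\<lambda>_. D) eps xi ell d' \<longrightarrow> (\<forall>i\<in>{1..I}. d' i = d i)))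
    \<and> (\<forall>j\<in>{1..I}. real (I - j) * D \<le> m j \<and> m j \<le> real (I - j + 1) * D \<longrightarrow>
          nash_eq I (\<lambda>_. D) eps xi ell
            (\<lambda>i. if i < j then 0
                 else if i = j then 1 / (xi j * ell j) - real (I - j) * D - eps j
                 else D))
    \<and> ((\<not> (\<exists>j\<in>{1..I}. real (I - j) * D \<le> m j \<and> m j \<le> real (I - j + 1) * D)) \<longrightarrow>
          (\<exists>j\<in>{0..I}. (j = 0 \<or> m j < real (I - j) * D) \<and>
                       (j = I \<or> real (I - j) * D < m (j + 1)) \<and>
                       nash_eq I (\<lambda>_. D) eps xi ell (\<lambda>i. if i \<le> j then 0 else D)))"
proof -
  note Dp = \<open>D > 0\<close>
  note pos = assms(3)
  have char: "nash_eq I (\<lambda>_. D) eps xi ell d \<longleftrightarrow>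
    (\<forall>i\<in>{1..I}. (d i > 0 \<longrightarrow> (\<Sum>j\<in>{1..I}. d j) \<le> m i) \<and>
                  (d i < D \<longrightarrow> (\<Sum>j\<in>{1..I}. d j) \<ge> m i))"
    if "feasible I (\<lambda>_. D) d" for d
    unfolding ne_char[OF pos that]
  proof (rule ball_cong[OF refl])
    fix i assume "i \<in> {1..I}"
    then have "m i = 1 / (xi i * ell i) - eps i" using m_def by blast
    then show "((d i > 0 \<longrightarrow> (\<Sum>j\<in>{1..I}. d j) \<le> 1 / (xi i * ell i) - eps i) \<and>
                  (d i < D \<longrightarrow> (\<Sum>j\<in>{1..I}. d j) \<ge> 1 / (xi i * ell i) - eps i)) =
               ((d i > 0 \<longrightarrow> (\<Sum>j\<in>{1..I}. d j) \<le> m i) \<and>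
                  (d i < D \<longrightarrow> (\<Sum>j\<in>{1..I}. d j) \<ge> m i))" by simp
  qed
  have mle: "m i \<le> m k" if "i \<in> {1..I}" "k \<in> {1..I}" "i \<le> k" for i k
  proof (cases "i = k")
    case False
    with that have "i < k" by simp
    then have "m i < m k" using m_mono that(1,2) by blast
    then show ?thesis by simp
  qed simp
  have P2: "nash_eq I (\<lambda>_. D) eps xi ell
            (\<lambda>i. if i < j then 0
                 else if i = j then 1 / (xi j * ell j) - real (I - j) * D - eps j
                 else D)"
    if j: "j \<in> {1..I}" and hj: "real (I - j) * D \<le> m j \<and> m j \<le> real (I - j + 1) * D" for j
  proof -
    define v where "v = m j - real (I - j) * D"
    have v: "0 \<le> v" "v \<le> D" using hj unfolding v_def by (auto simp: algebra_simps)
    define p where "p = (\<lambda>i. if i < j then 0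
                 else if i = j then 1 / (xi j * ell j) - real (I - j) * D - eps j
                 else D)"
    have p_eq: "p = (\<lambda>i. (if i \<le> j - 1 then 0 else D) + (if i = j then v - D else 0))"
      using j m_def unfolding p_def v_def by (auto intro!: ext)
    have feas: "feasible I (\<lambda>_. D) p" unfolding feasible_def p_eq using v Dp by auto
    have "(\<Sum>i\<in>{1..I}. p i) = real (I - (j - 1)) * D + (v - D)"
      unfolding p_eq sum.distrib sum_step using j by simp
    also have "real (I - (j - 1)) = real (I - j) + 1" using j by auto
    finally have S: "(\<Sum>i\<in>{1..I}. p i) = m j" unfolding v_def by (simp add: algebra_simps)
    have "\<forall>i\<in>{1..I}. (p i > 0 \<longrightarrow> (\<Sum>j\<in>{1..I}. p j) \<le> m i) \<and>
                  (p i < D \<longrightarrow> (\<Sum>j\<in>{1..I}. p j) \<ge> m i)"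
    proof
      fix i assume i: "i \<in> {1..I}"
      show "(p i > 0 \<longrightarrow> (\<Sum>j\<in>{1..I}. p j) \<le> m i) \<and> (p i < D \<longrightarrow> (\<Sum>j\<in>{1..I}. p j) \<ge> m i)"
      proof (cases "i < j")
        case True then show ?thesis using S mle[OF i j] by (simp add: p_def)
      next
        case False
        then show ?thesis using S mle[OF j i] by (auto simp: p_def)
      qed
    qed
    then show ?thesis using char[OF feas] unfolding p_def by simp
  qed
  have P3: "\<exists>j\<in>{0..I}. (j = 0 \<or> m j < real (I - j) * D) \<and>
                       (j = I \<or> real (I - j) * D < m (j + 1)) \<and>
                       nash_eq I (\<lambda>_. D) eps xi ell (\<lambda>i. if i \<le> j then 0 else D)"
    if nc: "\<not> (\<exists>j\<in>{1..I}. real (I - j) * D \<le> m j \<and> m j \<le> real (I - j + 1) * D)"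
  proof -
    define T where "T = {j\<in>{0..I}. j = 0 \<or> m j < real (I - j) * D}"
    define j where "j = Max T"
    have T: "finite T" "T \<noteq> {}" unfolding T_def by auto
    have jT: "j \<in> T" unfolding j_def using T by (rule Max_in)
    have jmax: "k \<le> j" if "k \<in> T" for k unfolding j_def using T that by simp
    have j1: "j \<in> {0..I}" "j = 0 \<or> m j < real (I - j) * D" using jT unfolding T_def by auto
    have j2: "real (I - j) * D < m (j + 1)" if "j < I"
    proof -
      have "j + 1 \<notin> T" using jmax by fastforce
      hence a: "\<not> m (j+1) < real (I - (j+1)) * D" using that unfolding T_def by auto
      have "j + 1 \<in> {1..I}" using that by auto
      with nc a have "m (j+1) > real (I - (j + 1) + 1) * D" by force
      moreover have "I - (j + 1) + 1 = I - j" using that by auto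
      ultimately show ?thesis by simp
    qed
    define q where "q = (\<lambda>i::nat. if i \<le> j then 0 else D)"
    have feas: "feasible I (\<lambda>_. D) q" unfolding feasible_def q_def using Dp by auto
    have S: "(\<Sum>i\<in>{1..I}. q i) = real (I - j) * D" unfolding q_def by (rule sum_step)
    have "\<forall>i\<in>{1..I}. (q i > 0 \<longrightarrow> (\<Sum>j\<in>{1..I}. q j) \<le> m i) \<and>
                  (q i < D \<longrightarrow> (\<Sum>j\<in>{1..I}. q j) \<ge> m i)"
    proof
      fix i assume i: "i \<in> {1..I}"
      show "(q i > 0 \<longrightarrow> (\<Sum>j\<in>{1..I}. q j) \<le> m i) \<and> (q i < D \<longrightarrow> (\<Sum>j\<in>{1..I}. q j) \<ge> m i)"
      proof (cases "i \<le> j")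
        case True
        then have "j \<in> {1..I}" "j \<noteq> 0" using i j1 by auto
        then show ?thesis using S mle[OF i] True j1 by (fastforce simp: q_def)
      next
        case False
        then have "j < I" "j + 1 \<in> {1..I}" "j + 1 \<le> i" using i by auto
        then show ?thesis using S mle[OF _ i, of "j+1"] j2 Dp by (auto simp: q_def)
      qed
    qed
    then have nq: "nash_eq I (\<lambda>_. D) eps xi ell q" using char[OF feas] by simp
    have j3: "j = I \<or> real (I - j) * D < m (j + 1)"
    proof (cases "j < I")
      case True then show ?thesis using j2 by (intro disjI2)
    next
      case False then have "j = I" using j1(1) by auto
      then show ?thesis by (intro disjI1)
    qed
    show ?thesis
    proof (rule bexI[of _ j])
      show "j \<in> {0..I}" by (rule j1(1))
      show "(j = 0 \<or> m j < real (I - j) * D) \<and> (j = I \<or> real (I - j) * D < m (j + 1)) \<and>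
            nash_eq I (\<lambda>_. D) eps xi ell (\<lambda>i. if i \<le> j then 0 else D)"
        by (rule conjI[OF j1(2) conjI[OF j3 nq[unfolded q_def]]])
    qed
  qed
  obtain d where d: "nash_eq I (\<lambda>_. D) eps xi ell d"
  proof (cases "\<exists>j\<in>{1..I}. real (I - j) * D \<le> m j \<and> m j \<le> real (I - j + 1) * D")
    case True then show ?thesis using P2 that by blast
  next
    case False then show ?thesis using P3 that by blast
  qed
  have feasN: "feasible I (\<lambda>_. D) e" if "nash_eq I (\<lambda>_. D) eps xi ell e" for e
    using that unfolding nash_eq_def by simp
  have rng: "0 \<le> e i \<and> e i \<le> D" if "nash_eq I (\<lambda>_. D) eps xi ell e" "i \<in> {1..I}" for e i
    using feasN[OF that(1)] that(2) unfolding feasible_def by auto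
  have Sle: "(\<Sum>i\<in>{1..I}. e i) \<le> (\<Sum>i\<in>{1..I}. e' i)"
    if e: "nash_eq I (\<lambda>_. D) eps xi ell e" and e': "nash_eq I (\<lambda>_. D) eps xi ell e'" for e e'
  proof (rule ccontr)
    assume "\<not> ?thesis"
    hence lt: "(\<Sum>i\<in>{1..I}. e' i) < (\<Sum>i\<in>{1..I}. e i)" by simp
    have ce: "\<forall>i\<in>{1..I}. (e i > 0 \<longrightarrow> (\<Sum>j\<in>{1..I}. e j) \<le> m i) \<and>
                  (e i < D \<longrightarrow> (\<Sum>j\<in>{1..I}. e j) \<ge> m i)" using char[OF feasN[OF e]] e by simp
    have ce': "\<forall>i\<in>{1..I}. (e' i > 0 \<longrightarrow> (\<Sum>j\<in>{1..I}. e' j) \<le> m i) \<and>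
                  (e' i < D \<longrightarrow> (\<Sum>j\<in>{1..I}. e' j) \<ge> m i)" using char[OF feasN[OF e']] e' by simp
    have "e i \<le> e' i" if i: "i \<in> {1..I}" for i
    proof (cases "e i > 0")
      case True
      hence "(\<Sum>j\<in>{1..I}. e j) \<le> m i" using ce i by auto
      hence "\<not> e' i < D" using ce' i lt by force
      then show ?thesis using rng[OF e i] by auto
    next
      case False then show ?thesis using rng[OF e i] rng[OF e' i] by auto
    qed
    hence "(\<Sum>i\<in>{1..I}. e i) \<le> (\<Sum>i\<in>{1..I}. e' i)" by (intro sum_mono) auto
    with lt show False by simp
  qed
  have uniq: "\<forall>i\<in>{1..I}. d' i = d i" if d': "nash_eq I (\<lambda>_. D) eps xi ell d'" for d'
  proof -
    define S where "S = (\<Sum>i\<in>{1..I}. d i)"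
    have SS: "(\<Sum>i\<in>{1..I}. d' i) = S" unfolding S_def using Sle[OF d d'] Sle[OF d' d] by simp
    have cd: "\<forall>i\<in>{1..I}. (d i > 0 \<longrightarrow> S \<le> m i) \<and> (d i < D \<longrightarrow> S \<ge> m i)"
      using char[OF feasN[OF d]] d unfolding S_def by simp
    have cd': "\<forall>i\<in>{1..I}. (d' i > 0 \<longrightarrow> S \<le> m i) \<and> (d' i < D \<longrightarrow> S \<ge> m i)"
      using char[OF feasN[OF d']] d' SS by simp
    have det: "d k = d' k" if k: "k \<in> {1..I}" "m k \<noteq> S" for k
    proof (cases "m k < S")
      case True
      then have "\<not> d k > 0" "\<not> d' k > 0" using cd cd' k by force+
      then show ?thesis using rng[OF d k(1)] rng[OF d' k(1)] by auto
    next
      case False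
      then have "m k > S" using k by auto
      then have "\<not> d k < D" "\<not> d' k < D" using cd cd' k by force+
      then show ?thesis using rng[OF d k(1)] rng[OF d' k(1)] by auto
    qed
    show ?thesis
    proof
      fix i assume i: "i \<in> {1..I}"
      show "d' i = d i"
      proof (cases "m i = S")
        case False then show ?thesis using det i by simp
      next
        case True
        have oth: "d k = d' k" if "k \<in> {1..I} - {i}" for k
        proof -
          have "m k \<noteq> m i"
          proof (cases "k < i")
            case True then have "m k < m i" using m_mono that i by blast
            then show ?thesis by simp
          next
            case False then have "i < k" using that by auto
            then have "m i < m k" using m_mono that i by blast
            then show ?thesis by simp
          qed
          then show ?thesis using det that True by auto
        qed
        have "S = d i + (\<Sum>k\<in>{1..I}-{i}. d k)" unfolding S_def using i by (intro sum.remove) auto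
        moreover have "S = d' i + (\<Sum>k\<in>{1..I}-{i}. d' k)" unfolding SS[symmetric] using i by (intro sum.remove) auto
        moreover have "(\<Sum>k\<in>{1..I}-{i}. d k) = (\<Sum>k\<in>{1..I}-{i}. d' k)" using oth by (intro sum.cong) auto
        ultimately show ?thesis by simp
      qed
    qed
  qed
  show ?thesis using d uniq P2 P3 by blast
qed

end
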